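(* Let $\pi$ be a uniformly $\rho$-robust, cost-invariant oracle for an objective $\boldsymbol{\mathcal{G}}$ with mistake constant $M^\pi_\rho$. Let $(\boldsymbol{x},\boldsymbol{u})$ be a trajectory and $\mathcal{I}=[t_1,t_2]$ a time interval such that the restriction $(x_{\mathcal{I}},u_{\mathcal{I}})$ belongs to $\bigcup_{\theta\in\mathsf{K}}\mathcal{S}_{\mathcal{I}}[\rho;\theta]$. Then: (i) if $s\in\mathcal{I}$, $s<t_2$, and $\mathcal{G}_s(x_s,u_s)=0$, then $\mathcal{G}_{s+1}(x_{s+1},u_{s+1})=0$; (ii) $\mathcal{G}_s(x_s,u_s)=0$ for all $s$ with $t_1+M^\pi_\rho\le s\le t_2$; (iii) if $\mathcal{G}_{t_1}(x_{t_1},u_{t_1})=0$ then $\sum_{t\in\mathcal{I}}\mathcal{G}_t(x_t,u_t)=0$; (iv) if $\mathcal{G}_{t_2}(x_{t_2},u_{t_2})=1$ then $|\mathcal{I}|\le M^\pi_\rho$.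
   Context: $\mathcal{X}$ (normed) and $\mathcal{U}$ are sets; $\mathcal{F}$ is a set of functions $\mathbb{N}\times\mathcal{X}\times\mathcal{U}\to\mathcal{X}$ with compact parametrization $(\mathbb{T},\mathsf{K},d)$: $(\mathsf{K},d)$ compact metric, $\mathbb{T}:\mathsf{K}\to2^{\mathcal{F}}$, $\mathcal{F}\subseteq\bigcup_\theta\mathbb{T}[\theta]$. An objective is a sequence $\mathcal{G}_t:\mathcal{X}\times\mathcal{U}\to\{0,1\}$; $\pi:\mathsf{K}\to\mathcal{C}$ with $\mathcal{C}$ the maps $\mathbb{N}\times\mathcal{X}\to\mathcal{U}$. For $\mathcal{I}=[t_1,t_2]$, $\theta\in\mathsf{K}$: $\mathcal{S}_{\mathcal{I}}[\rho;\theta]$ is the set of pairs $(x_{t_1..t_2}),(u_{t_1..t_2})$ for which there exist $f\in\mathbb{T}[\theta]$ and $\theta_k$ with $d(\theta_k,\theta)\le\rho$ such that $u_k=\pi[\theta_k](k,x_k)$ ($k\in\mathcal{I}$) and $x_{k+1}=f(k,x_k,u_k)$ ($k<t_2$). $m^\pi_\rho(\gamma;\theta)=\sup_{\mathcal{I}=[t,t'],t<t'}\sup\{\sum_{s\in\mathcal{I}}\mathcal{G}_s(x_s,u_s):(x_{\mathcal{I}},u_{\mathcal{I}})\in\mathcal{S}_{\mathcal{I}}[\rho;\theta],\|x_t\|\le\gamma\}$; $\pi$ is an oracle if $m^\pi_0<\infty$ everywhere, uniformly $\rho$-robust if $M^\pi_\rho:=\sup_{\gamma,\theta}m^\pi_\rho(\gamma;\theta)<\infty$.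 With $\mathsf{X}_t=\{x:\exists u,\mathcal{G}_t(x,u)=0\}$, cost invariance means: for all $\theta\in\mathsf{K},t\ge0$, $\mathcal{G}_t(x,\pi[\theta](t,x))=0$ for $x\in\mathsf{X}_t$, and $f(t,x,\pi[\theta'](t,x))\in\mathsf{X}_{t+1}$ for $x\in\mathsf{X}_t$, $f\in\mathbb{T}[\theta]$, $d(\theta',\theta)\le\rho$. *)

theory Defs
  imports "HOL-Analysis.Analysis" "HOL-Library.Extended_Nat"
begin

definition compact_param ::
  "'k::metric_space set \<Rightarrow> ('k \<Rightarrow> (nat \<Rightarrow> 'x \<Rightarrow> 'u \<Rightarrow> 'x) set)
     \<Rightarrow> (nat \<Rightarrow> 'x \<Rightarrow> 'u \<Rightarrow> 'x) set \<Rightarrow> bool" where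
  "compact_param K T F \<longleftrightarrow> compact K \<and> F \<subseteq> (\<Union>\<theta>\<in>K. T \<theta>)"

definition objective :: "(nat \<Rightarrow> 'x \<Rightarrow> 'u \<Rightarrow> nat) \<Rightarrow> bool" where
  "objective G \<longleftrightarrow> (\<forall>t x u. G t x u \<in> {0, 1})"

definition in_S ::
  "'k::metric_space set \<Rightarrow> ('k \<Rightarrow> (nat \<Rightarrow> 'x \<Rightarrow> 'u \<Rightarrow> 'x) set) \<Rightarrow> ('k \<Rightarrow> nat \<Rightarrow> 'x \<Rightarrow> 'u)
     \<Rightarrow> real \<Rightarrow> 'k \<Rightarrow> nat \<Rightarrow> nat \<Rightarrow> (nat \<Rightarrow> 'x) \<Rightarrow> (nat \<Rightarrow> 'u) \<Rightarrow> bool" where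
  "in_S K T \<pi> \<rho> \<theta> t1 t2 x u \<longleftrightarrow>
     (\<exists>f\<in>T \<theta>. \<exists>\<theta>s :: nat \<Rightarrow> 'k.
        (\<forall>k\<in>{t1..t2}. \<theta>s k \<in> K \<and> dist (\<theta>s k) \<theta> \<le> \<rho> \<and> u k = \<pi> (\<theta>s k) k (x k)) \<and>
        (\<forall>k. t1 \<le> k \<and> k < t2 \<longrightarrow> x (Suc k) = f k (x k) (u k)))"

definition mistakes ::
  "'k::metric_space set \<Rightarrow> ('k \<Rightarrow> (nat \<Rightarrow> 'x::real_normed_vector \<Rightarrow> 'u \<Rightarrow> 'x) set)
     \<Rightarrow> (nat \<Rightarrow> 'x \<Rightarrow> 'u \<Rightarrow> nat) \<Rightarrow> ('k \<Rightarrow> nat \<Rightarrow> 'x \<Rightarrow> 'u) \<Rightarrow> real \<Rightarrow> real \<Rightarrow> 'k \<Rightarrow> enat" where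
  "mistakes K T G \<pi> \<rho> \<gamma> \<theta> =
     Sup {enat (\<Sum>s\<in>{t..t'}. G s (x s) (u s)) | t t' x u.
            t < t' \<and> in_S K T \<pi> \<rho> \<theta> t t' x u \<and> norm (x t) \<le> \<gamma>}"

definition mistake_const ::
  "'k::metric_space set \<Rightarrow> ('k \<Rightarrow> (nat \<Rightarrow> 'x::real_normed_vector \<Rightarrow> 'u \<Rightarrow> 'x) set)
     \<Rightarrow> (nat \<Rightarrow> 'x \<Rightarrow> 'u \<Rightarrow> nat) \<Rightarrow> ('k \<Rightarrow> nat \<Rightarrow> 'x \<Rightarrow> 'u) \<Rightarrow> real \<Rightarrow> enat" where
  "mistake_const K T G \<pi> \<rho> = Sup {mistakes K T G \<pi> \<rho> \<gamma> \<theta> | \<gamma> \<theta>. \<theta> \<in> K}"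

definition is_orcl where
  "is_orcl K T G \<pi> \<longleftrightarrow> (\<forall>\<gamma> \<theta>. \<theta> \<in> K \<longrightarrow> mistakes K T G \<pi> 0 \<gamma> \<theta> < \<infinity>)"

definition uniformly_robust where
  "uniformly_robust K T G \<pi> \<rho> \<longleftrightarrow> mistake_const K T G \<pi> \<rho> < \<infinity>"

definition good_set :: "(nat \<Rightarrow> 'x \<Rightarrow> 'u \<Rightarrow> nat) \<Rightarrow> nat \<Rightarrow> 'x set" where
  "good_set G t = {x. \<exists>u. G t x u = 0}"

definition cost_invariant ::
  "'k::metric_space set \<Rightarrow> ('k \<Rightarrow> (nat \<Rightarrow> 'x \<Rightarrow> 'u \<Rightarrow> 'x) set)
     \<Rightarrow> (nat \<Rightarrow> 'x \<Rightarrow> 'u \<Rightarrow> nat) \<Rightarrow> ('k \<Rightarrow> nat \<Rightarrow> 'x \<Rightarrow> 'u) \<Rightarrow> real \<Rightarrow> bool" where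
  "cost_invariant K T G \<pi> \<rho> \<longleftrightarrow>
     (\<forall>\<theta>\<in>K. \<forall>t. \<forall>x\<in>good_set G t.
        G t x (\<pi> \<theta> t x) = 0 \<and>
        (\<forall>f\<in>T \<theta>. \<forall>\<theta>'\<in>K. dist \<theta>' \<theta> \<le> \<rho> \<longrightarrow> f t x (\<pi> \<theta>' t x) \<in> good_set G (Suc t)))"

end

theory Submission
  imports Defs
begin

lemma stepA:
  assumes inv: "cost_invariant K T G \<pi> \<rho>" and th: "\<theta> \<in> K"
    and S: "in_S K T \<pi> \<rho> \<theta> t1 t2 x u"
    and s: "t1 \<le> s" "s < t2" and g: "G s (x s) (u s) = 0"
  shows "G (Suc s) (x (Suc s)) (u (Suc s)) = 0"
proof -
  from S obtain f \<theta>s where f: "f \<in> T \<theta>"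
    and A: "\<forall>k\<in>{t1..t2}. \<theta>s k \<in> K \<and> dist (\<theta>s k) \<theta> \<le> \<rho> \<and> u k = \<pi> (\<theta>s k) k (x k)"
    and B: "\<forall>k. t1 \<le> k \<and> k < t2 \<longrightarrow> x (Suc k) = f k (x k) (u k)"
    unfolding in_S_def by blast
  have xs: "x s \<in> good_set G s" using g unfolding good_set_def by blast
  have a: "\<theta>s s \<in> K" "dist (\<theta>s s) \<theta> \<le> \<rho>" "u s = \<pi> (\<theta>s s) s (x s)" using A s by auto
  have "f s (x s) (\<pi> (\<theta>s s) s (x s)) \<in> good_set G (Suc s)"
    using inv th xs f a unfolding cost_invariant_def by blast
  hence xs1: "x (Suc s) \<in> good_set G (Suc s)" using B s a by auto
  have a1: "\<theta>s (Suc s) \<in> K" "u (Suc s) = \<pi> (\<theta>s (Suc s)) (Suc s) (x (Suc s))" using A s by auto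
  show ?thesis using inv a1 xs1 unfolding cost_invariant_def by auto
qed

lemma propB:
  assumes inv: "cost_invariant K T G \<pi> \<rho>" and th: "\<theta> \<in> K"
    and S: "in_S K T \<pi> \<rho> \<theta> t1 t2 x u"
    and r: "t1 \<le> r" "r \<le> s" "s \<le> t2" and g: "G r (x r) (u r) = 0"
  shows "G s (x s) (u s) = 0"
  using r
proof (induction s)
  case 0 thus ?case using g by simp
next
  case (Suc n)
  show ?case
  proof (cases "r = Suc n")
    case True thus ?thesis using g by simp
  next
    case False
    hence "G n (x n) (u n) = 0" using Suc by auto
    thus ?thesis using stepA[OF inv th S, of n] Suc False by auto
  qed
qed

lemma restrictD:
  assumes "in_S K T \<pi> \<rho> \<theta> t1 t2 x u" "s \<le> t2"
  shows "in_S K T \<pi> \<rho> \<theta> t1 s x u"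
  using assms unfolding in_S_def by force

lemma sumC:
  assumes th: "\<theta> \<in> K" and rho: "\<rho> \<ge> 0"
    and S: "in_S K T \<pi> \<rho> \<theta> t1 t2 x u" and I: "t1 \<le> t2"
  shows "enat (\<Sum>t\<in>{t1..t2}. G t (x t) (u t)) \<le> mistake_const K T G \<pi> \<rho>"
proof -
  from S obtain f \<theta>s where f: "f \<in> T \<theta>"
    and A: "\<forall>k\<in>{t1..t2}. \<theta>s k \<in> K \<and> dist (\<theta>s k) \<theta> \<le> \<rho> \<and> u k = \<pi> (\<theta>s k) k (x k)"
    and B: "\<forall>k. t1 \<le> k \<and> k < t2 \<longrightarrow> x (Suc k) = f k (x k) (u k)"
    unfolding in_S_def by blast
  define x' where "x' = x(Suc t2 := f t2 (x t2) (u t2))"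
  define u' where "u' = u(Suc t2 := \<pi> \<theta> (Suc t2) (x' (Suc t2)))"
  define \<theta>s' where "\<theta>s' = \<theta>s(Suc t2 := \<theta>)"
  have S': "in_S K T \<pi> \<rho> \<theta> t1 (Suc t2) x' u'"
    unfolding in_S_def
  proof (intro bexI[OF _ f] exI[of _ \<theta>s'] conjI ballI allI impI)
    fix k assume k: "k \<in> {t1..Suc t2}"
    show "\<theta>s' k \<in> K" "dist (\<theta>s' k) \<theta> \<le> \<rho>" "u' k = \<pi> (\<theta>s' k) k (x' k)"
      using A k th rho by (auto simp: \<theta>s'_def u'_def x'_def le_Suc_eq)
  next
    fix k assume "t1 \<le> k \<and> k < Suc t2"
    thus "x' (Suc k) = f k (x' k) (u' k)"
      using B by (auto simp: x'_def u'_def less_Suc_eq)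
  qed
  have eq: "(\<Sum>t\<in>{t1..t2}. G t (x t) (u t)) = (\<Sum>t\<in>{t1..t2}. G t (x' t) (u' t))"
    by (rule sum.cong) (auto simp: x'_def u'_def)
  also have "\<dots> \<le> (\<Sum>t\<in>{t1..Suc t2}. G t (x' t) (u' t))"
    by (rule sum_mono2) auto
  finally have le: "(\<Sum>t\<in>{t1..t2}. G t (x t) (u t)) \<le> (\<Sum>t\<in>{t1..Suc t2}. G t (x' t) (u' t))" .
  have "enat (\<Sum>t\<in>{t1..Suc t2}. G t (x' t) (u' t)) \<le> mistakes K T G \<pi> \<rho> (norm (x' t1)) \<theta>"
    unfolding mistakes_def
  proof (rule Sup_upper, intro CollectI exI conjI)
    show "enat (\<Sum>t\<in>{t1..Suc t2}. G t (x' t) (u' t)) = enat (\<Sum>s\<in>{t1..Suc t2}. G s (x' s) (u' s))" ..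
  qed (use S' I in auto)
  also have "\<dots> \<le> mistake_const K T G \<pi> \<rho>"
    unfolding mistake_const_def by (rule Sup_upper) (use th in auto)
  finally show ?thesis using le by (meson enat_ord_simps(1) order_trans)
qed

theorem mainTheorem12:
  fixes K :: "'k::metric_space set"
    and T :: "'k \<Rightarrow> (nat \<Rightarrow> 'x::real_normed_vector \<Rightarrow> 'u \<Rightarrow> 'x) set"
    and F :: "(nat \<Rightarrow> 'x \<Rightarrow> 'u \<Rightarrow> 'x) set"
    and G :: "nat \<Rightarrow> 'x \<Rightarrow> 'u \<Rightarrow> nat"
    and \<pi> :: "'k \<Rightarrow> nat \<Rightarrow> 'x \<Rightarrow> 'u"
    and \<rho> :: real
    and x :: "nat \<Rightarrow> 'x" and u :: "nat \<Rightarrow> 'u"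
    and t1 t2 :: nat
  assumes param: "compact_param K T F"
    and obj: "objective G"
    and rho: "\<rho> \<ge> 0"
    and orc: "is_orcl K T G \<pi>"
    and robust: "uniformly_robust K T G \<pi> \<rho>"
    and inv: "cost_invariant K T G \<pi> \<rho>"
    and I: "t1 \<le> t2"
    and traj: "\<exists>\<theta>\<in>K. in_S K T \<pi> \<rho> \<theta> t1 t2 x u"
  shows "(\<forall>s. t1 \<le> s \<and> s < t2 \<and> G s (x s) (u s) = 0 \<longrightarrow> G (Suc s) (x (Suc s)) (u (Suc s)) = 0)
    \<and> (\<forall>s. enat t1 + mistake_const K T G \<pi> \<rho> \<le> enat s \<and> s \<le> t2 \<longrightarrow> G s (x s) (u s) = 0)
    \<and> (G t1 (x t1) (u t1) = 0 \<longrightarrow> (\<Sum>t\<in>{t1..t2}. G t (x t) (u t)) = 0)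
    \<and> (G t2 (x t2) (u t2) = 1 \<longrightarrow> enat (card {t1..t2}) \<le> mistake_const K T G \<pi> \<rho>)"
proof -
  from traj obtain \<theta> where th: "\<theta> \<in> K" and S: "in_S K T \<pi> \<rho> \<theta> t1 t2 x u" by blast
  have G01: "G a b c = 0 \<or> G a b c = 1" for a b c using obj unfolding objective_def by auto
  have key: "enat (card {t1..s}) \<le> mistake_const K T G \<pi> \<rho>"
    if s: "t1 \<le> s" "s \<le> t2" and g: "G s (x s) (u s) = 1" for s
  proof -
    have all1: "G r (x r) (u r) = 1" if "r \<in> {t1..s}" for r
      using propB[OF inv th S, of r s] that s g G01[of r "x r" "u r"] by auto
    have "(\<Sum>t\<in>{t1..s}. G t (x t) (u t)) = card {t1..s}"
      using all1 by simp
    moreover have "enat (\<Sum>t\<in>{t1..s}. G t (x t) (u t)) \<le> mistake_const K T G \<pi> \<rho>"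
      using sumC[OF th rho restrictD[OF S s(2)] s(1)] .
    ultimately show ?thesis by simp
  qed
  have p1: "\<forall>s. t1 \<le> s \<and> s < t2 \<and> G s (x s) (u s) = 0 \<longrightarrow> G (Suc s) (x (Suc s)) (u (Suc s)) = 0"
    using stepA[OF inv th S] by blast
  have p2: "\<forall>s. enat t1 + mistake_const K T G \<pi> \<rho> \<le> enat s \<and> s \<le> t2 \<longrightarrow> G s (x s) (u s) = 0"
  proof (intro allI impI)
    fix s assume a: "enat t1 + mistake_const K T G \<pi> \<rho> \<le> enat s \<and> s \<le> t2"
    show "G s (x s) (u s) = 0"
    proof (rule ccontr)
      assume "G s (x s) (u s) \<noteq> 0"
      hence g: "G s (x s) (u s) = 1" using G01[of s "x s" "u s"] by simp
      obtain M where M: "mistake_const K T G \<pi> \<rho> = enat M"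
        using robust unfolding uniformly_robust_def by (cases "mistake_const K T G \<pi> \<rho>") auto
      have s1: "t1 \<le> s" using a M by auto
      have "enat (card {t1..s}) \<le> enat M" using key[OF s1 _ g] a M by auto
      thus False using a M by auto
    qed
  qed
  have p3: "G t1 (x t1) (u t1) = 0 \<longrightarrow> (\<Sum>t\<in>{t1..t2}. G t (x t) (u t)) = 0"
    using propB[OF inv th S, of t1] by auto
  have p4: "G t2 (x t2) (u t2) = 1 \<longrightarrow> enat (card {t1..t2}) \<le> mistake_const K T G \<pi> \<rho>"
    using key[OF I order_refl] by blast
  show ?thesis using p1 p2 p3 p4 by blast
qed

end
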